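(* Let $K_1,\dots,K_N$ be kernels on $X\times X$, let $k\le N$, and let $\mathcal{K}=\{\sum_{i=1}^N w_iK_i:\ \sum_{i=1}^N w_i=1\ \text{and}\ \sum_{i=1}^N[w_i\neq 0]\le k\}$. Then \[ d_\phi(\mathcal{K})\leq 2k\log(k)+2k\log(4eN). \]
   Context: $[w_i\ne 0]$ is $1$ if $w_i\neq0$ and $0$ otherwise. For a class $\mathcal{K}$ of real functions on $X\times X$: $\mathcal{K}$ pseudo-shatters pairs $(x_1,x_1'),\dots,(x_r,x_r')$ if there exist thresholds $t_1,\dots,t_r$ such that for every $b\in\{-1,+1\}^r$ there is $K\in\mathcal{K}$ with $\mathrm{sign}(K(x_i,x_i')-t_i)=b_i$ for all $i$; the pseudodimension $d_\phi(\mathcal{K})$ is the largest $r$ such that some set of $r$ pairs is pseudo-shattered by $\mathcal{K}$. *)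

theory Defs
  imports Complex_Main "HOL-Library.Extended_Real"
begin

definition is_kernel :: "('x \<Rightarrow> 'x \<Rightarrow> real) \<Rightarrow> bool" where
  "is_kernel K \<longleftrightarrow> (\<forall>x y. K x y = K y x) \<and>
     (\<forall>(n::nat) (xs::nat \<Rightarrow> 'x) (c::nat \<Rightarrow> real).
        (\<Sum>i<n. \<Sum>j<n. c i * c j * K (xs i) (xs j)) \<ge> 0)"

definition pseudo_shatters ::
  "('x \<Rightarrow> 'x \<Rightarrow> real) set \<Rightarrow> ('x \<times> 'x) list \<Rightarrow> bool" where
  "pseudo_shatters KK ps \<longleftrightarrow>
     (\<exists>t :: nat \<Rightarrow> real. \<forall>b :: nat \<Rightarrow> real. (\<forall>i<length ps. b i \<in> {-1, 1}) \<longrightarrow>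
        (\<exists>K\<in>KK. \<forall>i<length ps. sgn (K (fst (ps ! i)) (snd (ps ! i)) - t i) = b i))"

definition pseudodim :: "('x \<Rightarrow> 'x \<Rightarrow> real) set \<Rightarrow> enat" where
  "pseudodim KK = Sup {enat (length ps) | ps. distinct ps \<and> pseudo_shatters KK ps}"

definition sparse_comb_class ::
  "(nat \<Rightarrow> 'x \<Rightarrow> 'x \<Rightarrow> real) \<Rightarrow> nat \<Rightarrow> nat \<Rightarrow> ('x \<Rightarrow> 'x \<Rightarrow> real) set" where
  "sparse_comb_class Ks N k =
     {(\<lambda>x y. \<Sum>i=1..N. w i * Ks i x y) | w :: nat \<Rightarrow> real.
        (\<Sum>i=1..N. w i) = 1 \<and> card {i\<in>{1..N}. w i \<noteq> 0} \<le> k}"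

end

theory Submission
  imports Defs "HOL-Library.FuncSet" "HOL-Library.Function_Algebras" "HOL-Analysis.Harmonic_Numbers"
begin

lemma card_small_subsets:
  assumes "finite U"
  shows "card {A. A \<subseteq> U \<and> card A \<le> k} \<le> (card U + 1) ^ k"
proof -
  define P where "P = (\<Pi>\<^sub>E i\<in>{..<k}. insert None (Some ` U))"
  define g where "g = (\<lambda>f::nat \<Rightarrow> 'a option. {x. Some x \<in> f ` {..<k}})"
  have sub: "{A. A \<subseteq> U \<and> card A \<le> k} \<subseteq> g ` P"
  proof
    fix A assume "A \<in> {A. A \<subseteq> U \<and> card A \<le> k}"
    hence AU: "A \<subseteq> U" and Ak: "card A \<le> k" by auto
    have fA: "finite A" using AU assms finite_subset by blast
    obtain h where h: "bij_betw h {..<card A} A"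
      using ex_bij_betw_nat_finite[OF fA] by (auto simp: atLeast0LessThan)
    define f where "f = (\<lambda>i. if i < card A then Some (h i) else if i < k then None else undefined)"
    have "f \<in> P"
    proof -
      have "\<forall>i<card A. h i \<in> U" using h AU bij_betwE by blast
      then show ?thesis unfolding P_def f_def PiE_def Pi_def extensional_def using Ak by auto
    qed
    moreover have "g f = A"
    proof
      show "g f \<subseteq> A" unfolding g_def f_def using h bij_betwE
        by (auto split: if_splits)
      show "A \<subseteq> g f"
      proof
        fix x assume "x \<in> A"
        then obtain i where "i < card A" "h i = x" using h
          by (metis bij_betw_iff_bijections lessThan_iff)
        thus "x \<in> g f" unfolding g_def f_def using Ak by (auto intro!: image_eqI[of _ _ i])
      qed
    qed
    ultimately show "A \<in> g ` P" by blast
  qed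
  have "card {A. A \<subseteq> U \<and> card A \<le> k} \<le> card (g ` P)"
    by (rule card_mono[OF _ sub]) (simp add: P_def assms finite_PiE)
  also have "\<dots> \<le> card P" by (rule card_image_le) (simp add: P_def assms finite_PiE)
  also have "card P = (card U + 1) ^ k"
    unfolding P_def using assms
    by (simp add: card_PiE card_image inj_on_def)
  finally show ?thesis .
qed

definition shatters_set :: "'a set set \<Rightarrow> 'a set \<Rightarrow> bool" where
  "shatters_set F B \<longleftrightarrow> (\<forall>C\<subseteq>B. \<exists>X\<in>F. X \<inter> B = C)"

lemma pajor:
  assumes "finite A" "F \<subseteq> Pow A"
  shows "card F \<le> card {B. B \<subseteq> A \<and> shatters_set F B}"
  using assms
proof (induction A arbitrary: F rule: finite_induct)
  case empty
  then have "F \<subseteq> {{}}" by auto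
  then show ?case
  proof (cases "F = {}")
    case True then show ?thesis by simp
  next
    case False
    with \<open>F \<subseteq> {{}}\<close> have "F = {{}}" by blast
    then have "{B. B \<subseteq> {} \<and> shatters_set F B} = {{}}" by (auto simp: shatters_set_def)
    then show ?thesis using \<open>F = {{}}\<close> by simp
  qed
next
  case (insert x A)
  define rx where "rx = (\<lambda>X. X - {x})"
  define F0 where "F0 = {X\<in>F. x \<notin> X}"
  define Fx where "Fx = {X\<in>F. x \<in> X}"
  define F1 where "F1 = F0 \<union> rx ` Fx"
  define F2 where "F2 = F0 \<inter> rx ` Fx"
  have finF: "finite F" using insert.prems insert.hyps(1) finite_subset by (metis finite_Pow_iff finite_insert)
  have F1A: "F1 \<subseteq> Pow A" using insert.prems unfolding F1_def F0_def Fx_def rx_def by auto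
  have F2A: "F2 \<subseteq> Pow A" using insert.prems unfolding F2_def F0_def Fx_def rx_def by auto
  have inj: "inj_on rx Fx" unfolding inj_on_def rx_def Fx_def by blast
  have "card F1 + card F2 = card F0 + card (rx ` Fx)"
  proof -
    have "finite F0" "finite (rx ` Fx)" using finF unfolding F0_def Fx_def by auto
    from card_Un_Int[OF this] show ?thesis unfolding F1_def F2_def by simp
  qed
  also have "\<dots> = card F0 + card Fx" using card_image[OF inj] by simp
  also have "\<dots> = card F"
  proof -
    have "F = F0 \<union> Fx" "F0 \<inter> Fx = {}" unfolding F0_def Fx_def by auto
    then show ?thesis using finF by (metis card_Un_disjoint finite_Un)
  qed
  finally have cardF: "card F = card F1 + card F2" by simp
  define Sh where "Sh = {B. B \<subseteq> insert x A \<and> shatters_set F B}"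
  define Sh1 where "Sh1 = {B. B \<subseteq> A \<and> shatters_set F1 B}"
  define Sh2 where "Sh2 = {B. B \<subseteq> A \<and> shatters_set F2 B}"
  have s1: "Sh1 \<subseteq> Sh"
  proof
    fix B assume "B \<in> Sh1"
    hence BA: "B \<subseteq> A" and sh: "shatters_set F1 B" unfolding Sh1_def by auto
    have "shatters_set F B" unfolding shatters_set_def
    proof (intro allI impI)
      fix C assume "C \<subseteq> B"
      then obtain Y where "Y \<in> F1" "Y \<inter> B = C" using sh unfolding shatters_set_def by blast
      then obtain X where "X \<in> F" "rx X = Y" unfolding F1_def F0_def Fx_def rx_def by auto
      moreover have "x \<notin> B" using BA insert.hyps(2) by blast
      ultimately show "\<exists>X\<in>F. X \<inter> B = C" using \<open>Y \<inter> B = C\<close> unfolding rx_def by blast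
    qed
    then show "B \<in> Sh" using BA unfolding Sh_def by auto
  qed
  have s2: "insert x ` Sh2 \<subseteq> Sh"
  proof
    fix B' assume "B' \<in> insert x ` Sh2"
    then obtain B where B': "B' = insert x B" and BA: "B \<subseteq> A" and sh: "shatters_set F2 B"
      unfolding Sh2_def by auto
    have xB: "x \<notin> B" using BA insert.hyps(2) by blast
    have "shatters_set F (insert x B)" unfolding shatters_set_def
    proof (intro allI impI)
      fix C assume C: "C \<subseteq> insert x B"
      have "C - {x} \<subseteq> B" using C by blast
      then obtain Y where Y: "Y \<in> F2" "Y \<inter> B = C - {x}" using sh unfolding shatters_set_def
        by blast
      have YF: "Y \<in> F" "x \<notin> Y" "insert x Y \<in> F"
        using Y(1) unfolding F2_def F0_def Fx_def rx_def by (auto simp: insert_absorb)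
      show "\<exists>X\<in>F. X \<inter> insert x B = C"
      proof (cases "x \<in> C")
        case True
        then show ?thesis using YF Y C by (intro bexI[of _ "insert x Y"]) auto
      next
        case False
        then show ?thesis using YF Y C by (intro bexI[of _ Y]) auto
      qed
    qed
    then show "B' \<in> Sh" using BA B' unfolding Sh_def by auto
  qed
  have disj: "Sh1 \<inter> insert x ` Sh2 = {}" unfolding Sh1_def using insert.hyps(2) by auto
  have injx: "inj_on (insert x) Sh2"
  proof (rule inj_onI)
    fix B1 B2 assume a: "B1 \<in> Sh2" "B2 \<in> Sh2" "insert x B1 = insert x B2"
    have "x \<notin> B1" "x \<notin> B2" using a insert.hyps(2) unfolding Sh2_def by auto
    with a(3) show "B1 = B2" by (metis Diff_insert_absorb)
  qed
  have finSh: "finite Sh" unfolding Sh_def using insert.hyps(1) by auto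
  have "card F \<le> card Sh1 + card Sh2"
    using cardF insert.IH[OF F1A] insert.IH[OF F2A] unfolding Sh1_def Sh2_def by simp
  also have "\<dots> = card (Sh1 \<union> insert x ` Sh2)"
  proof -
    have f1: "finite Sh1" using finSh s1 finite_subset by blast
    have f2: "finite (insert x ` Sh2)" using finSh s2 finite_subset by blast
    show ?thesis using card_Un_disjoint[OF f1 f2 disj] card_image[OF injx] by simp
  qed
  also have "\<dots> \<le> card Sh" using s1 s2 finSh by (intro card_mono) auto
  finally show ?case unfolding Sh_def .
qed

lemma sum_fun_apply: "(\<Sum>x\<in>A. f x) i = (\<Sum>x\<in>A. (f x i :: 'b::comm_monoid_add))"
  by (induction A rule: infinite_finite_induct) auto

lemma lin_dep:
  fixes v :: "nat \<Rightarrow> nat \<Rightarrow> real"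
  assumes fS: "finite S" and fB: "finite B" and lt: "card S < card B"
  shows "\<exists>\<alpha>. (\<exists>j\<in>B. \<alpha> j \<noteq> 0) \<and> (\<forall>i\<in>S. (\<Sum>j\<in>B. \<alpha> j * v i j) = 0)"
proof -
  define u where "u = (\<lambda>j. (\<lambda>i. if i \<in> S then v i j else 0) :: nat \<Rightarrow> real)"
  show ?thesis
  proof (cases "inj_on u B")
    case False
    then obtain j1 j2 where j: "j1 \<in> B" "j2 \<in> B" "j1 \<noteq> j2" "u j1 = u j2"
      unfolding inj_on_def by blast
    define \<alpha> where "\<alpha> = (\<lambda>j. if j = j1 then (1::real) else if j = j2 then -1 else 0)"
    have "\<forall>i\<in>S. (\<Sum>j\<in>B. \<alpha> j * v i j) = 0"
    proof
      fix i assume iS: "i \<in> S"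
      have "v i j1 = v i j2" using j(4) iS unfolding u_def by (metis (mono_tags))
      moreover have "(\<Sum>j\<in>B. \<alpha> j * v i j) = (\<Sum>j\<in>{j1,j2}. \<alpha> j * v i j)"
        using j fB by (intro sum.mono_neutral_right) (auto simp: \<alpha>_def)
      ultimately show "(\<Sum>j\<in>B. \<alpha> j * v i j) = 0" using j(3) by (simp add: \<alpha>_def)
    qed
    moreover have "\<alpha> j1 \<noteq> 0" by (simp add: \<alpha>_def)
    ultimately show ?thesis using j(1) by blast
  next
    case True
    interpret V: vector_space "\<lambda>(c::real) (f::nat\<Rightarrow>real). (\<lambda>i. c * f i)"
      by unfold_locales (auto simp: fun_eq_iff algebra_simps)
    define e where "e = (\<lambda>i. (\<lambda>l. if l = i then 1 else 0) :: nat \<Rightarrow> real)"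
    define T where "T = e ` S"
    define U where "U = u ` B"
    have cU: "card U = card B" unfolding U_def using card_image[OF True] .
    have fT: "finite T" unfolding T_def using fS by simp
    have cT: "card T \<le> card S" unfolding T_def using fS card_image_le by blast
    have UspT: "U \<subseteq> V.span T"
    proof
      fix x assume "x \<in> U"
      then obtain j where x: "x = u j" unfolding U_def by blast
      have "x = (\<Sum>i\<in>S. (\<lambda>l. v i j * e i l))"
        unfolding x u_def e_def using fS by (auto simp: fun_eq_iff sum_fun_apply if_distrib cong: if_cong)
      also have "\<dots> \<in> V.span T"
        by (intro V.span_sum V.span_scale V.span_base) (auto simp: T_def)
      finally show "x \<in> V.span T" .
    qed
    have "V.dependent U"
    proof (rule ccontr)
      assume "\<not> V.dependent U"
      from V.independent_span_bound[OF fT this UspT] have "card U \<le> card T" by simp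
      with cU cT lt show False by simp
    qed
    then obtain c where c: "\<exists>x\<in>U. c x \<noteq> 0" "(\<Sum>x\<in>U. (\<lambda>i. c x * x i)) = 0"
      using V.dependent_finite[of U] fB unfolding U_def by auto
    define \<alpha> where "\<alpha> = (\<lambda>j. c (u j))"
    have "\<exists>j\<in>B. \<alpha> j \<noteq> 0" using c(1) unfolding U_def \<alpha>_def by auto
    moreover have "\<forall>i\<in>S. (\<Sum>j\<in>B. \<alpha> j * v i j) = 0"
    proof
      fix i assume iS: "i \<in> S"
      have "0 = (\<Sum>x\<in>U. (\<lambda>i. c x * x i)) i" using c(2) by simp
      also have "\<dots> = (\<Sum>x\<in>U. c x * x i)" by (simp add: sum_fun_apply)
      also have "\<dots> = (\<Sum>j\<in>B. c (u j) * u j i)" unfolding U_def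
        by (subst sum.reindex[OF True]) simp
      also have "\<dots> = (\<Sum>j\<in>B. \<alpha> j * v i j)" using iS by (simp add: \<alpha>_def u_def)
      finally show "(\<Sum>j\<in>B. \<alpha> j * v i j) = 0" by simp
    qed
    ultimately show ?thesis by blast
  qed
qed

lemma real_bound:
  fixes x :: real and k N :: nat
  assumes k1: "1 \<le> k" and kN: "k \<le> N" and x0: "x \<ge> 0"
    and hyp: "x * ln 2 \<le> real k * ln (real N + 1) + real k * ln (x + 1)"
  shows "x \<le> 2 * real k * ln (real k) + 2 * real k * ln (4 * exp 1 * real N)"
proof -
  define l where "l = ln (2::real)"
  have l23: "l \<ge> 2/3" unfolding l_def using ln2_ge_two_thirds .
  have kpos: "real k \<ge> 1" using k1 by simp
  have Npos: "real N \<ge> 1" using k1 kN by simp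
  define L where "L = ln (real k) + ln (real N)"
  have L0: "L \<ge> 0" unfolding L_def using kpos Npos by simp
  define \<beta> where "\<beta> = 2 * L + 2 + 4 * l"
  define B where "B = real k * \<beta>"
  have ln4: "ln (4::real) = 2 * l"
  proof -
    have "ln ((2::real) ^ 2) = real 2 * ln 2" by (rule ln_realpow)
    then show ?thesis by (simp add: l_def)
  qed
  have Beq: "2 * real k * ln (real k) + 2 * real k * ln (4 * exp 1 * real N) = B"
  proof -
    have "ln (4 * exp 1 * real N) = ln 4 + 1 + ln (real N)"
      using Npos by (simp add: ln_mult_pos)
    then show ?thesis unfolding B_def \<beta>_def L_def ln4 by (simp add: algebra_simps)
  qed
  have \<beta>ge: "\<beta> \<ge> 14/3" unfolding \<beta>_def using L0 l23 by linarith
  have Bge: "B \<ge> real k * (14/3)" unfolding B_def using \<beta>ge kpos by (intro mult_left_mono) auto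
  have B0: "B \<ge> 0" using Bge kpos by linarith
  show ?thesis unfolding Beq
  proof (rule ccontr)
    assume "\<not> x \<le> B"
    hence xB: "x > B" by simp
    have "ln (x + 1) - ln (B + 1) = ln ((x + 1) / (B + 1))"
      using xB B0 by (simp add: ln_divide_pos)
    also have "\<dots> \<le> (x + 1) / (B + 1) - 1" using B0 x0 by (intro ln_le_minus_one) simp
    also have "\<dots> = (x - B) / (B + 1)" using B0 by (simp add: field_simps)
    finally have s1: "ln (x + 1) - ln (B + 1) \<le> (x - B) / (B + 1)" .
    have kB: "real k / (B + 1) < l"
    proof -
      have "l * (B + 1) \<ge> (2/3) * (B + 1)" using l23 B0 by (intro mult_right_mono) auto
      moreover have "(2/3) * (B + 1) > real k" using Bge kpos by (simp add: algebra_simps)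
      ultimately have "real k < l * (B + 1)" by linarith
      then show ?thesis using B0 by (simp add: field_simps)
    qed
    have "real k * (ln (x + 1) - ln (B + 1)) \<le> real k * ((x - B) / (B + 1))"
      using s1 by (intro mult_left_mono) auto
    also have "\<dots> = (real k / (B + 1)) * (x - B)" by simp
    also have "\<dots> < l * (x - B)" using kB xB by (intro mult_strict_right_mono) auto
    finally have s1': "real k * ln (x + 1) - real k * ln (B + 1) < l * x - l * B"
      by (simp add: algebra_simps)
    have lB1: "ln (B + 1) \<le> ln (real k) + ln (\<beta> + 1)"
    proof -
      have "B + 1 \<le> real k * (\<beta> + 1)" unfolding B_def using kpos by (simp add: algebra_simps)
      hence "ln (B + 1) \<le> ln (real k * (\<beta> + 1))" using B0 by (intro ln_mono) auto
      also have "\<dots> = ln (real k) + ln (\<beta> + 1)" using kpos \<beta>ge by (simp add: ln_mult_pos)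
      finally show ?thesis .
    qed
    have lN1: "ln (real N + 1) \<le> l + ln (real N)"
    proof -
      have "ln (real N + 1) \<le> ln (2 * real N)" using Npos by (intro ln_mono) auto
      also have "\<dots> = l + ln (real N)" using Npos by (simp add: ln_mult_pos l_def)
      finally show ?thesis .
    qed
    have l3: "ln (3::real) \<le> l + 1/2"
    proof -
      have "ln (3::real) = ln (2 * (3/2))" by simp
      also have "\<dots> = l + ln (3/2)" using ln_mult_pos[of 2 "3/2::real"] by (simp add: l_def)
      also have "ln (3/2::real) \<le> 3/2 - 1" by (rule ln_le_minus_one) simp
      finally show ?thesis by simp
    qed
    have lb: "ln (\<beta> + 1) \<le> (8/3) * l + L / 3"
    proof -
      have e: "\<beta> + 1 = 6 * ((\<beta> + 1) / 6)" by simp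
      have a0: "ln (\<beta> + 1) = ln (6 * ((\<beta> + 1) / 6))" by (rule arg_cong[OF e])
      have a1: "ln (6 * ((\<beta> + 1) / 6)) = ln 6 + ln ((\<beta> + 1) / 6)" by (rule ln_mult_pos) (use \<beta>ge in auto)
      have b: "ln (6::real) = l + ln 3" using ln_mult_pos[of 2 "3::real"] by (simp add: l_def)
      have c: "ln ((\<beta> + 1) / 6) \<le> (\<beta> + 1) / 6 - 1" using \<beta>ge by (intro ln_le_minus_one) simp
      have bd: "\<beta> = 2 * L + 2 + 4 * l" by (simp add: \<beta>_def)
      have "ln (\<beta> + 1) = l + ln 3 + ln ((\<beta> + 1) / 6)" using a0 a1 b by simp
      then show ?thesis using c l3 bd by (simp add: field_simps)
    qed
    have p1: "L * l \<ge> L * (2/3)" using L0 l23 by (intro mult_left_mono) auto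
    have p2: "l * l \<ge> l * (2/3)" using l23 by (intro mult_left_mono) auto
    have bl: "\<beta> * l = 2 * (L * l) + 2 * l + 4 * (l * l)" unfolding \<beta>_def by (simp add: algebra_simps)
    have s2a: "\<beta> * l \<ge> l + ln (real N) + ln (real k) + ln (\<beta> + 1)"
    proof -
      have Ld: "L = ln (real k) + ln (real N)" by (simp add: L_def)
      show ?thesis using bl p1 p2 lb l23 Ld by linarith
    qed
    have "real k * (\<beta> * l) \<ge> real k * (l + ln (real N) + ln (real k) + ln (\<beta> + 1))"
      using s2a kpos by (intro mult_left_mono) auto
    hence s2: "B * l \<ge> real k * ln (real N + 1) + real k * ln (B + 1)"
    proof -
      assume a: "real k * (\<beta> * l) \<ge> real k * (l + ln (real N) + ln (real k) + ln (\<beta> + 1))"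
      have "real k * ln (real N + 1) \<le> real k * (l + ln (real N))" using lN1 kpos by (intro mult_left_mono) auto
      moreover have "real k * ln (B + 1) \<le> real k * (ln (real k) + ln (\<beta> + 1))" using lB1 kpos by (intro mult_left_mono) auto
      ultimately show ?thesis using a unfolding B_def by (simp add: algebra_simps)
    qed
    have e1: "x * ln 2 = l * x" by (simp add: l_def)
    have e2: "B * l = l * B" by simp
    from hyp s1' s2 e1 e2 show False by linarith
  qed
qed

lemma sign_prod: "((x::real) > 0 \<longleftrightarrow> a > 0) \<Longrightarrow> x \<noteq> 0 \<Longrightarrow> a \<noteq> 0 \<Longrightarrow> a * x > 0"
  by (auto simp: zero_less_mult_iff)

lemma lin_shatter:
  fixes v :: "nat \<Rightarrow> nat \<Rightarrow> real" and t :: "nat \<Rightarrow> real"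
  assumes fS: "finite S" and fB: "finite B"
    and sh: "\<And>C. C \<subseteq> B \<Longrightarrow> \<exists>w. (\<forall>j\<in>B. (\<Sum>i\<in>S. w i * v i j) \<noteq> t j)
                     \<and> {j\<in>B. (\<Sum>i\<in>S. w i * v i j) > t j} = C"
  shows "card B \<le> card S"
proof (rule ccontr)
  assume "\<not> ?thesis"
  then have lt: "card S < card B" by simp
  obtain \<alpha> where a1: "\<exists>j\<in>B. \<alpha> j \<noteq> 0" and a2: "\<forall>i\<in>S. (\<Sum>j\<in>B. \<alpha> j * v i j) = 0"
    using lin_dep[OF fS fB lt] by blast
  define c where "c = (\<Sum>j\<in>B. \<alpha> j * t j)"
  have key: "(\<Sum>j\<in>B. \<alpha> j * ((\<Sum>i\<in>S. w i * v i j) - t j)) = - c" for w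
  proof -
    have "(\<Sum>j\<in>B. \<alpha> j * ((\<Sum>i\<in>S. w i * v i j) - t j))
        = (\<Sum>j\<in>B. \<Sum>i\<in>S. w i * (\<alpha> j * v i j)) - c"
      by (simp add: c_def right_diff_distrib sum_subtractf sum_distrib_left mult_ac)
    also have "(\<Sum>j\<in>B. \<Sum>i\<in>S. w i * (\<alpha> j * v i j)) = (\<Sum>i\<in>S. w i * (\<Sum>j\<in>B. \<alpha> j * v i j))"
      by (subst sum.swap) (simp add: sum_distrib_left)
    also have "\<dots> = 0" using a2 by simp
    finally show ?thesis by simp
  qed
  obtain j0 where j0: "j0 \<in> B" "\<alpha> j0 \<noteq> 0" using a1 by blast
  show False
  proof (cases "c \<ge> 0")
    case True
    obtain w where w1: "\<forall>j\<in>B. (\<Sum>i\<in>S. w i * v i j) \<noteq> t j"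
      and w2: "{j\<in>B. (\<Sum>i\<in>S. w i * v i j) > t j} = {j\<in>B. \<alpha> j > 0}"
      using sh[of "{j\<in>B. \<alpha> j > 0}"] by blast
    have nn: "\<forall>j\<in>B. 0 \<le> \<alpha> j * ((\<Sum>i\<in>S. w i * v i j) - t j)"
    proof
      fix j assume j: "j \<in> B"
      show "0 \<le> \<alpha> j * ((\<Sum>i\<in>S. w i * v i j) - t j)"
      proof (cases "\<alpha> j = 0")
        case False
        have "((\<Sum>i\<in>S. w i * v i j) - t j > 0) \<longleftrightarrow> \<alpha> j > 0"
          using w2 j by (simp add: set_eq_iff) blast
        from sign_prod[OF this] w1 j False show ?thesis by auto
      qed simp
    qed
    have pj: "0 < \<alpha> j0 * ((\<Sum>i\<in>S. w i * v i j0) - t j0)"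
    proof -
      have "((\<Sum>i\<in>S. w i * v i j0) - t j0 > 0) \<longleftrightarrow> \<alpha> j0 > 0"
        using w2 j0 by (simp add: set_eq_iff) blast
      from sign_prod[OF this] w1 j0 show ?thesis by auto
    qed
    have "0 < (\<Sum>j\<in>B. \<alpha> j * ((\<Sum>i\<in>S. w i * v i j) - t j))"
      by (rule sum_pos2[OF fB j0(1)]) (use pj nn in auto)
    then show False using key[of w] True by simp
  next
    case False
    obtain w where w1: "\<forall>j\<in>B. (\<Sum>i\<in>S. w i * v i j) \<noteq> t j"
      and w2: "{j\<in>B. (\<Sum>i\<in>S. w i * v i j) > t j} = {j\<in>B. \<alpha> j < 0}"
      using sh[of "{j\<in>B. \<alpha> j < 0}"] by blast
    have nn: "\<forall>j\<in>B. 0 \<le> (- \<alpha> j) * ((\<Sum>i\<in>S. w i * v i j) - t j)"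
    proof
      fix j assume j: "j \<in> B"
      show "0 \<le> (- \<alpha> j) * ((\<Sum>i\<in>S. w i * v i j) - t j)"
      proof (cases "\<alpha> j = 0")
        case False
        have "((\<Sum>i\<in>S. w i * v i j) - t j > 0) \<longleftrightarrow> - \<alpha> j > 0"
          using w2 j by (simp add: set_eq_iff) blast
        from sign_prod[OF this] w1 j False show ?thesis by auto
      qed simp
    qed
    have pj: "0 < (- \<alpha> j0) * ((\<Sum>i\<in>S. w i * v i j0) - t j0)"
    proof -
      have "((\<Sum>i\<in>S. w i * v i j0) - t j0 > 0) \<longleftrightarrow> - \<alpha> j0 > 0"
        using w2 j0 by (simp add: set_eq_iff) blast
      from sign_prod[OF this] w1 j0 show ?thesis by auto
    qed
    have "0 < (\<Sum>j\<in>B. (- \<alpha> j) * ((\<Sum>i\<in>S. w i * v i j) - t j))"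
      by (rule sum_pos2[OF fB j0(1)]) (use pj nn in auto)
    also have "\<dots> = - (\<Sum>j\<in>B. \<alpha> j * ((\<Sum>i\<in>S. w i * v i j) - t j))"
      by (simp add: sum_negf)
    finally show False using key[of w] False by simp
  qed
qed

lemma count_bound:
  fixes Ks :: "nat \<Rightarrow> 'x \<Rightarrow> 'x \<Rightarrow> real"
  assumes shat: "pseudo_shatters (sparse_comb_class Ks N k) ps"
  shows "(2::nat) ^ length ps \<le> (N + 1) ^ k * (length ps + 1) ^ k"
proof -
  define r where "r = length ps"
  obtain t where t: "\<And>b. (\<forall>i<r. b i \<in> {-1, 1}) \<Longrightarrow>
      (\<exists>K\<in>sparse_comb_class Ks N k. \<forall>i<r. sgn (K (fst (ps ! i)) (snd (ps ! i)) - t i) = b i)"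
    using shat unfolding pseudo_shatters_def r_def by blast
  define v where "v = (\<lambda>i j. Ks i (fst (ps ! j)) (snd (ps ! j)))"
  define M where "M = (\<lambda>S w j. (\<Sum>i\<in>S. w i * v i j))"
  define FS where "FS = (\<lambda>S. {P. \<exists>w. (\<forall>j<r. M S w j \<noteq> t j) \<and> P = {j. j < r \<and> M S w j > t j}})"
  define Sups where "Sups = {S. S \<subseteq> {1..N} \<and> card S \<le> k}"
  have cover: "Pow {..<r} \<subseteq> (\<Union>S\<in>Sups. FS S)"
  proof
    fix C assume "C \<in> Pow {..<r}"
    hence Cr: "C \<subseteq> {..<r}" by simp
    define b where "b = (\<lambda>j. if j \<in> C then 1 else -1 :: real)"
    obtain K where K: "K \<in> sparse_comb_class Ks N k"
      and Kb: "\<forall>i<r. sgn (K (fst (ps ! i)) (snd (ps ! i)) - t i) = b i"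
    proof -
      have "\<forall>i<r. b i \<in> {-1, 1}" by (simp add: b_def)
      from t[OF this] show ?thesis using that by blast
    qed
    obtain w where Kw: "K = (\<lambda>x y. \<Sum>i=1..N. w i * Ks i x y)"
      and wk: "card {i\<in>{1..N}. w i \<noteq> 0} \<le> k"
      using K unfolding sparse_comb_class_def by blast
    define S where "S = {i\<in>{1..N}. w i \<noteq> 0}"
    have SS: "S \<in> Sups" unfolding Sups_def S_def using wk by auto
    have eq: "K (fst (ps ! j)) (snd (ps ! j)) = M S w j" for j
      unfolding Kw M_def v_def S_def by (rule sum.mono_neutral_right) auto
    have "C \<in> FS S"
      unfolding FS_def
    proof (intro CollectI exI conjI allI impI)
      fix j assume "j < r"
      with Kb have "sgn (M S w j - t j) = b j" using eq by simp
      then show "M S w j \<noteq> t j" unfolding b_def by (auto split: if_splits)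
    next
      show "C = {j. j < r \<and> M S w j > t j}"
      proof (intro set_eqI iffI)
        fix j assume jC: "j \<in> C"
        with Cr have jr: "j < r" by auto
        with Kb have "sgn (M S w j - t j) = 1" using eq jC by (simp add: b_def)
        then show "j \<in> {j. j < r \<and> M S w j > t j}" using jr by (simp add: sgn_1_pos)
      next
        fix j assume "j \<in> {j. j < r \<and> M S w j > t j}"
        hence jr: "j < r" and g: "M S w j > t j" by auto
        have "sgn (M S w j - t j) = b j" using Kb jr by (simp add: eq)
        moreover have "sgn (M S w j - t j) = 1" using g by simp
        ultimately show "j \<in> C" unfolding b_def by (auto split: if_splits)
      qed
    qed
    with SS show "C \<in> (\<Union>S\<in>Sups. FS S)" by blast
  qed
  have finSups: "finite Sups" unfolding Sups_def by (rule finite_subset[of _ "Pow {1..N}"]) auto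
  have FSsub: "FS S \<subseteq> Pow {..<r}" for S unfolding FS_def by auto
  have cardFS: "card (FS S) \<le> (r + 1) ^ k" if SS: "S \<in> Sups" for S
  proof -
    have fS: "finite S" and Sk: "card S \<le> k" using SS unfolding Sups_def
      by (auto intro: finite_subset)
    have "card (FS S) \<le> card {B. B \<subseteq> {..<r} \<and> shatters_set (FS S) B}"
      by (rule pajor[OF _ FSsub]) simp
    also have "\<dots> \<le> card {B. B \<subseteq> {..<r} \<and> card B \<le> k}"
    proof (rule card_mono)
      show "finite {B. B \<subseteq> {..<r} \<and> card B \<le> k}" by simp
      show "{B. B \<subseteq> {..<r} \<and> shatters_set (FS S) B} \<subseteq> {B. B \<subseteq> {..<r} \<and> card B \<le> k}"
      proof
        fix B assume "B \<in> {B. B \<subseteq> {..<r} \<and> shatters_set (FS S) B}"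
        hence Br: "B \<subseteq> {..<r}" and sh: "shatters_set (FS S) B" by auto
        have fB: "finite B" using Br finite_subset by blast
        have "card B \<le> card S"
        proof (rule lin_shatter[OF fS fB, of v t])
          fix C assume "C \<subseteq> B"
          then obtain P where P: "P \<in> FS S" "P \<inter> B = C" using sh unfolding shatters_set_def by blast
          then obtain w where w1: "\<forall>j<r. M S w j \<noteq> t j" and w2: "P = {j. j < r \<and> M S w j > t j}"
            unfolding FS_def by blast
          have "(\<forall>j\<in>B. (\<Sum>i\<in>S. w i * v i j) \<noteq> t j)" using w1 Br unfolding M_def by auto
          moreover have "{j\<in>B. (\<Sum>i\<in>S. w i * v i j) > t j} = C"
            using P(2) w2 Br unfolding M_def by auto
          ultimately show "\<exists>w. (\<forall>j\<in>B. (\<Sum>i\<in>S. w i * v i j) \<noteq> t j)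
                     \<and> {j\<in>B. (\<Sum>i\<in>S. w i * v i j) > t j} = C" by blast
        qed
        with Sk Br show "B \<in> {B. B \<subseteq> {..<r} \<and> card B \<le> k}" by simp
      qed
    qed
    also have "\<dots> \<le> (card {..<r} + 1) ^ k" by (rule card_small_subsets) simp
    finally show ?thesis by simp
  qed
  have "(2::nat) ^ r = card (Pow {..<r})" by (simp add: card_Pow)
  also have "\<dots> \<le> card (\<Union>S\<in>Sups. FS S)"
    by (rule card_mono[OF _ cover]) (use FSsub in \<open>auto intro: finite_subset[of _ "Pow {..<r}"]\<close>)
  also have "\<dots> \<le> (\<Sum>S\<in>Sups. card (FS S))" by (rule card_UN_le[OF finSups])
  also have "\<dots> \<le> (\<Sum>S\<in>Sups. (r + 1) ^ k)" by (rule sum_mono) (rule cardFS)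
  also have "\<dots> = card Sups * (r + 1) ^ k" by simp
  also have "card Sups \<le> (N + 1) ^ k"
    using card_small_subsets[of "{1..N}" k] unfolding Sups_def by simp
  finally show ?thesis unfolding r_def by (simp add: mult_right_mono)
qed

lemma nat_le_floor_helper: "real n \<le> x \<Longrightarrow> n \<le> nat \<lfloor>x\<rfloor>"
  by (metis floor_mono floor_of_nat nat_int nat_mono)

theorem lemma4:
  fixes Ks :: "nat \<Rightarrow> 'x \<Rightarrow> 'x \<Rightarrow> real" and N k :: nat
  assumes "\<And>i. i \<in> {1..N} \<Longrightarrow> is_kernel (Ks i)"
    and "k \<le> N"
  shows "ereal_of_enat (pseudodim (sparse_comb_class Ks N k))
           \<le> ereal (2 * real k * ln (real k) + 2 * real k * ln (4 * exp 1 * real N))"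
proof -
  define KK where "KK = sparse_comb_class Ks N k"
  define Bd where "Bd = 2 * real k * ln (real k) + 2 * real k * ln (4 * exp 1 * real N)"
  have Bd0: "Bd \<ge> 0"
  proof (cases "k = 0")
    case True then show ?thesis by (simp add: Bd_def)
  next
    case False
    hence k1: "real k \<ge> 1" and N1: "real N \<ge> 1" using assms(2) by auto
    have e1: "exp (1::real) \<ge> 1" by simp
    have "4 * exp 1 * real N \<ge> 4 * 1 * 1" using e1 N1 by (intro mult_mono) auto
    hence "ln (4 * exp 1 * real N) \<ge> 0" by simp
    moreover have "ln (real k) \<ge> 0" using k1 by simp
    ultimately show ?thesis unfolding Bd_def using k1 by simp
  qed
  have bnd: "real (length ps) \<le> Bd" if sh: "pseudo_shatters KK ps" for ps
  proof (cases "k = 0")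
    case True
    have "KK = {}"
    proof (rule ccontr)
      assume "KK \<noteq> {}"
      then obtain w where w1: "(\<Sum>i=1..N. w i) = (1::real)" and w2: "card {i\<in>{1..N}. w i \<noteq> 0} \<le> 0"
        unfolding KK_def sparse_comb_class_def using True by auto
      have "{i\<in>{1..N}. w i \<noteq> 0} = {}" using w2 by simp
      hence "(\<Sum>i=1..N. w i) = 0" by (intro sum.neutral) auto
      with w1 show False by simp
    qed
    moreover obtain t where tt: "\<forall>b :: nat \<Rightarrow> real. (\<forall>i<length ps. b i \<in> {-1, 1}) \<longrightarrow>
        (\<exists>K\<in>KK. \<forall>i<length ps. sgn (K (fst (ps ! i)) (snd (ps ! i)) - t i) = b i)"
      using sh unfolding pseudo_shatters_def by blast
    ultimately have False using spec[OF tt, of "\<lambda>_. 1"] by simp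
    then show ?thesis ..
  next
    case False
    hence k1: "1 \<le> k" by simp
    define r where "r = length ps"
    have "(2::nat) ^ r \<le> (N + 1) ^ k * (r + 1) ^ k"
      using count_bound[OF sh[unfolded KK_def]] unfolding r_def .
    hence "real ((2::nat) ^ r) \<le> real ((N + 1) ^ k * (r + 1) ^ k)" by (simp only: of_nat_le_iff)
    hence p: "(2::real) ^ r \<le> ((real N + 1) * (real r + 1)) ^ k" by (simp add: power_mult_distrib add.commute)
    have "ln ((2::real) ^ r) \<le> ln (((real N + 1) * (real r + 1)) ^ k)"
      using p by (intro ln_mono) auto
    hence "real r * ln 2 \<le> real k * ln ((real N + 1) * (real r + 1))" by (simp add: ln_realpow)
    also have "ln ((real N + 1) * (real r + 1)) = ln (real N + 1) + ln (real r + 1)"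
      by (rule ln_mult_pos) auto
    finally have "real r * ln 2 \<le> real k * ln (real N + 1) + real k * ln (real r + 1)"
      by (simp add: algebra_simps)
    from real_bound[OF k1 assms(2) _ this] show ?thesis unfolding Bd_def r_def by simp
  qed
  have "pseudodim KK \<le> enat (nat \<lfloor>Bd\<rfloor>)"
    unfolding pseudodim_def
  proof (rule Sup_least)
    fix x assume "x \<in> {enat (length ps) |ps. distinct ps \<and> pseudo_shatters KK ps}"
    then obtain ps where "x = enat (length ps)" "pseudo_shatters KK ps" by blast
    then show "x \<le> enat (nat \<lfloor>Bd\<rfloor>)" using bnd nat_le_floor_helper by auto
  qed
  hence "ereal_of_enat (pseudodim KK) \<le> ereal_of_enat (enat (nat \<lfloor>Bd\<rfloor>))"
    by (simp only: ereal_of_enat_le_iff)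
  also have "\<dots> = ereal (real (nat \<lfloor>Bd\<rfloor>))" by simp
  also have "\<dots> \<le> ereal Bd" using Bd0 by simp
  finally show ?thesis unfolding KK_def Bd_def .
qed

end
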